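(* Let $1<p<\infty$ and $s\in(0,1]$. There is a constant $C$ depending only on $N,p,s$ such that for every locally integrable $f$ on $\mathbb R^N$, $$\Big\|\frac{f(x)-f(y)}{|x-y|^{\frac Np+s}}\Big\|_{L(p,\infty)(\mathbb R^N\times\mathbb R^N)}\le C\,\|f_s^\#\|_{L^p(\mathbb R^N)}.$$ That is, $C^s_p(\mathbb R^N)\subset BSY^s_p(\mathbb R^N)$.
   Context: For a measurable function $F$ on a measure space $(Y,\nu)$, $\|F\|_{L(p,\infty)(Y,\nu)}=\sup_{\lambda>0}\lambda\,\nu(\{|F|>\lambda\})^{1/p}$; $\mathbb R^N\times\mathbb R^N$ carries Lebesgue measure $\mathcal L^{2N}$. The sharp fractional maximal function is $f_s^\#(x)=\sup_{r>0}\frac{1}{r^{s+N}}\int_{B(x,r)}|f(y)-(f)_{B(x,r)}|\,dy$, with $(f)_{B}$ the Lebesgue average of $f$ over the ball $B$. $\|f\|_{C^s_p}:=\|f_s^\#\|_{L^p}$ and $\|f\|_{BSY^s_p}$ is the left-hand side above. *)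

theory Defs
  imports "HOL-Analysis.Analysis"
begin

definition enn_powr :: "ennreal \<Rightarrow> real \<Rightarrow> ennreal" where
  "enn_powr a q = (if a = top then top else ennreal (enn2real a powr q))"

definition locally_integrable :: "('a::euclidean_space \<Rightarrow> real) \<Rightarrow> bool" where
  "locally_integrable f \<longleftrightarrow> (\<forall>K. compact K \<longrightarrow> set_integrable lebesgue K f)"

definition ball_avg :: "('a::euclidean_space \<Rightarrow> real) \<Rightarrow> 'a \<Rightarrow> real \<Rightarrow> real" where
  "ball_avg f x r = (LINT y:ball x r|lebesgue. f y) / measure lebesgue (ball x r)"

definition sharp_max :: "real \<Rightarrow> ('a::euclidean_space \<Rightarrow> real) \<Rightarrow> 'a \<Rightarrow> ennreal" where
  "sharp_max s f x = (SUP r\<in>{0<..}. ennreal (1 / r powr (s + real DIM('a))) *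
      (\<integral>\<^sup>+ y\<in>ball x r. ennreal \<bar>f y - ball_avg f x r\<bar> \<partial>lebesgue))"

definition Lp_norm :: "real \<Rightarrow> 'a measure \<Rightarrow> ('a \<Rightarrow> ennreal) \<Rightarrow> ennreal" where
  "Lp_norm p M g = enn_powr (\<integral>\<^sup>+ x. enn_powr (g x) p \<partial>M) (1 / p)"

definition weak_Lp_norm :: "real \<Rightarrow> 'a measure \<Rightarrow> ('a \<Rightarrow> real) \<Rightarrow> ennreal" where
  "weak_Lp_norm p M F = (SUP t\<in>{0<..}. ennreal t *
      enn_powr (emeasure M {z \<in> space M. \<bar>F z\<bar> > t}) (1 / p))"

end

theory Submission
  imports Defs
begin

locale sharp =
  fixes f :: "'a::euclidean_space \<Rightarrow> real" and s :: real
  assumes li: "locally_integrable f" and spos: "0 < s"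
begin

definition om :: real where "om = measure lborel (ball (0::'a) 1)"

lemma om_pos: "om > 0" unfolding om_def by (rule content_ball_pos) simp

lemma mball: "r \<ge> 0 \<Longrightarrow> measure lebesgue (ball (x::'a) r) = r ^ DIM('a) * om"
proof -
  assume r: "r \<ge> 0"
  have "measure lebesgue (ball (x::'a) r) = measure lborel (ball x r)" by (simp add: measure_completion)
  also have "\<dots> = r ^ DIM('a) * om" unfolding om_def by (rule content_ball_conv_unit_ball[OF r])
  finally show ?thesis .
qed

lemma mball_pos: "r > 0 \<Longrightarrow> measure lebesgue (ball (x::'a) r) > 0"
  unfolding mball[OF less_imp_le] using om_pos by (simp add: mult_pos_pos)

lemma int_cball: "set_integrable lebesgue (cball x r) f"
  using li unfolding locally_integrable_def by auto

lemma int_ball: "set_integrable lebesgue (ball x r) f"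
  by (rule set_integrable_subset[OF int_cball[of x r]]) auto

lemma f_meas: "f \<in> borel_measurable lebesgue"
proof (rule borel_measurable_LIMSEQ_real)
  show "(\<lambda>i. indicator (cball 0 (real i)) x *\<^sub>R f x) \<longlonglongrightarrow> f x" for x
  proof (rule tendsto_eventually)
    obtain n :: nat where "norm x \<le> n" using real_arch_simple by blast
    then show "\<forall>\<^sub>F i in sequentially. indicator (cball 0 (real i)) x *\<^sub>R f x = f x"
      unfolding eventually_sequentially
      by (intro exI[of _ n]) (auto simp: indicator_def)
  qed
  show "(\<lambda>x. indicator (cball 0 (real i)) x *\<^sub>R f x) \<in> borel_measurable lebesgue" for i
    using int_cball[of 0 "real i"] unfolding set_integrable_def by (rule borel_measurable_integrable)
qed


lemma ball_lmeas: "ball (x::'a) r \<in> sets lebesgue" by simp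

lemma ball_fin: "emeasure lebesgue (ball (x::'a) r) < \<infinity>"
  using emeasure_lborel_ball_finite[of x r] by (simp add: emeasure_completion)

lemma int_const: "set_integrable lebesgue (ball (x::'a) r) (\<lambda>_. c::real)"
  unfolding set_integrable_def
  using integrable_real_indicator[OF ball_lmeas ball_fin, of x r]
  by (simp add: mult.commute)

lemma int_absdiff: "set_integrable lebesgue (ball (x::'a) r) (\<lambda>y. \<bar>f y - c\<bar>)"
  by (intro set_integrable_abs set_integral_diff(1) int_ball int_const)

definition osc :: "'a \<Rightarrow> real \<Rightarrow> real" where
  "osc x r = (LINT y:ball x r|lebesgue. \<bar>f y - ball_avg f x r\<bar>)"

lemma set_int_mono_sets:
  assumes "A \<subseteq> B" "set_integrable lebesgue B g" "A \<in> sets lebesgue" "\<And>y. 0 \<le> (g y::real)"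
  shows "(LINT y:A|lebesgue. g y) \<le> (LINT y:B|lebesgue. g y)"
proof -
  have iA: "set_integrable lebesgue A g" by (rule set_integrable_subset[OF assms(2,3,1)])
  show ?thesis using iA assms(2) unfolding set_integrable_def set_lebesgue_integral_def
    by (intro integral_mono) (use assms(1,4) in \<open>auto simp: indicator_def\<close>)
qed

lemma set_abs_le: "\<bar>(LINT y:A|lebesgue. (g y::real))\<bar> \<le> (LINT y:A|lebesgue. \<bar>g y\<bar>)"
  unfolding set_lebesgue_integral_def
  using integral_abs_bound[of lebesgue "\<lambda>y. indicator A y *\<^sub>R g y"]
  by (simp add: abs_mult)

lemma avg_const: "r > 0 \<Longrightarrow> (LINT y:ball (x::'a) r|lebesgue. c) = measure lebesgue (ball x r) * c"
  by (subst set_integral_const) (use emeasure_lborel_ball_finite[of x r] in auto)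

lemma avg_cmp:
  assumes sub: "ball x' r' \<subseteq> ball (x::'a) r" and r': "r' > 0"
  shows "\<bar>ball_avg f x' r' - c\<bar> \<le> (LINT y:ball x r|lebesgue. \<bar>f y - c\<bar>) / measure lebesgue (ball x' r')"
proof -
  let ?m = "measure lebesgue (ball x' r')"
  have m: "?m > 0" using mball_pos[OF r'] .
  have "ball_avg f x' r' - c = (LINT y:ball x' r'|lebesgue. f y - c) / ?m"
    unfolding ball_avg_def using m
    by (simp add: set_integral_diff(2)[OF int_ball int_const] avg_const[OF r'] field_simps)
  also have "\<bar>\<dots>\<bar> \<le> (LINT y:ball x' r'|lebesgue. \<bar>f y - c\<bar>) / ?m"
    using m by (simp add: abs_divide divide_right_mono set_abs_le)
  also have "\<dots> \<le> (LINT y:ball x r|lebesgue. \<bar>f y - c\<bar>) / ?m"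
    using m by (intro divide_right_mono set_int_mono_sets[OF sub int_absdiff]) auto
  finally show ?thesis .
qed

definition T :: "'a \<Rightarrow> real \<Rightarrow> ennreal" where
  "T x r = ennreal (1 / r powr (s + real DIM('a))) *
      (\<integral>\<^sup>+ y\<in>ball x r. ennreal \<bar>f y - ball_avg f x r\<bar> \<partial>lebesgue)"

definition gD :: "'a \<Rightarrow> ennreal" where
  "gD x = (SUP k::int. T x (2 powr real_of_int k))"

lemma gD_le: "gD x \<le> sharp_max s f x"
  unfolding gD_def sharp_max_def T_def
  by (rule SUP_mono) auto

lemma osc_nonneg: "osc x r \<ge> 0"
  unfolding osc_def set_lebesgue_integral_def
  by (rule Bochner_Integration.integral_nonneg) (auto simp: indicator_def)

lemma nn_osc: "(\<integral>\<^sup>+ y\<in>ball x r. ennreal \<bar>f y - ball_avg f x r\<bar> \<partial>lebesgue) = ennreal (osc x r)"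
proof -
  have "(\<integral>\<^sup>+ y\<in>ball x r. ennreal \<bar>f y - ball_avg f x r\<bar> \<partial>lebesgue)
       = (\<integral>\<^sup>+ y. ennreal (indicator (ball x r) y *\<^sub>R \<bar>f y - ball_avg f x r\<bar>) \<partial>lebesgue)"
    by (intro nn_integral_cong) (auto simp: indicator_def)
  also have "\<dots> = ennreal (osc x r)"
    unfolding osc_def set_lebesgue_integral_def
    using int_absdiff[of x r "ball_avg f x r"] unfolding set_integrable_def
    by (intro nn_integral_eq_integral) (auto simp: indicator_def)
  finally show ?thesis .
qed

lemma osc_bound:
  assumes "T x r \<le> ennreal G" "r > 0" "G \<ge> 0"
  shows "osc x r \<le> G * r powr (s + real DIM('a))"
proof -
  have p: "r powr (s + real DIM('a)) > 0" using assms(2) by simp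
  have "ennreal (osc x r / r powr (s + real DIM('a))) \<le> ennreal G"
    using assms(1) unfolding T_def nn_osc
    by (simp add: ennreal_mult'[symmetric] osc_nonneg)
  then have "osc x r / r powr (s + real DIM('a)) \<le> G" using assms(3) by (simp add: ennreal_le_iff)
  then show ?thesis using p by (simp add: divide_le_eq)
qed

lemma osc_bound_gD:
  assumes "gD x \<le> ennreal G" "G \<ge> 0"
  shows "osc x (2 powr real_of_int k) \<le> G * (2 powr real_of_int k) powr (s + real DIM('a))"
proof (rule osc_bound[OF _ _ assms(2)])
  show "T x (2 powr real_of_int k) \<le> ennreal G"
    using assms(1) unfolding gD_def by (meson SUP_le_iff order_trans UNIV_I)
qed simp

end

lemma geom_conv:
  fixes b :: "nat \<Rightarrow> real"
  assumes d: "\<And>n. \<bar>b (Suc n) - b n\<bar> \<le> A * q ^ n" and q: "0 \<le> q" "q < 1"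
  shows "b \<longlonglongrightarrow> b 0 + (\<Sum>n. b (Suc n) - b n)"
    and "\<bar>(\<Sum>n. b (Suc n) - b n)\<bar> \<le> A / (1 - q)"
proof -
  have sg: "summable (\<lambda>n. A * q ^ n)" using q by (intro summable_mult summable_geometric) auto
  have sa: "summable (\<lambda>n. \<bar>b (Suc n) - b n\<bar>)"
    by (rule summable_comparison_test'[OF sg]) (use d in auto)
  have s: "summable (\<lambda>n. b (Suc n) - b n)" by (rule summable_rabs_cancel[OF sa])
  have "(\<lambda>n. b 0 + (\<Sum>i<n. b (Suc i) - b i)) \<longlonglongrightarrow> b 0 + (\<Sum>n. b (Suc n) - b n)"
    by (intro tendsto_add tendsto_const summable_LIMSEQ s)
  then show "b \<longlonglongrightarrow> b 0 + (\<Sum>n. b (Suc n) - b n)"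
    by (simp add: sum_lessThan_telescope)
  have "\<bar>(\<Sum>n. b (Suc n) - b n)\<bar> \<le> (\<Sum>n. \<bar>b (Suc n) - b n\<bar>)" by (rule summable_rabs[OF sa])
  also have "\<dots> \<le> (\<Sum>n. A * q ^ n)" by (rule suminf_le[OF d sa sg])
  also have "\<dots> = A / (1 - q)" using q by (simp add: suminf_mult suminf_geometric)
  finally show "\<bar>(\<Sum>n. b (Suc n) - b n)\<bar> \<le> A / (1 - q)" .
qed


lemma pow2_pow: "(2 powr (a::real)) ^ n = 2 powr (a * real n)"
  by (simp add: powr_realpow[symmetric] powr_powr)

context sharp begin

definition c0 :: real where "c0 = 2 powr real DIM('a) / om"

lemma c0_pos: "c0 > 0" unfolding c0_def using om_pos by simp

lemma step:
  assumes "gD x \<le> ennreal G" "G \<ge> 0"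
  shows "\<bar>ball_avg f x (2 powr (real_of_int k - 1)) - ball_avg f x (2 powr real_of_int k)\<bar>
         \<le> c0 * G * (2 powr real_of_int k) powr s"
proof -
  let ?j = "real_of_int k"
  have sub: "ball x (2 powr (?j - 1)) \<subseteq> ball x (2 powr ?j)"
    by (intro subset_ball) simp
  have "\<bar>ball_avg f x (2 powr (?j - 1)) - ball_avg f x (2 powr ?j)\<bar>
        \<le> osc x (2 powr ?j) / measure lebesgue (ball x (2 powr (?j - 1)))"
    unfolding osc_def by (rule avg_cmp[OF sub]) simp
  also have "\<dots> \<le> G * (2 powr ?j) powr (s + real DIM('a)) / measure lebesgue (ball x (2 powr (?j - 1)))"
    by (intro divide_right_mono osc_bound_gD assms) simp
  also have "\<dots> = G * (2 powr ?j) powr (s + real DIM('a)) / (2 powr ((?j - 1) * real DIM('a)) * om)"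
    using mball[of "2 powr (?j - 1)" x] by (simp add: pow2_pow)
  also have "\<dots> = c0 * G * (2 powr ?j) powr s"
  proof -
    have e: "?j * (s + real DIM('a)) = real DIM('a) + ?j * s + (?j - 1) * real DIM('a)"
      by (simp add: algebra_simps)
    have "(2 powr ?j) powr (s + real DIM('a)) = 2 powr (?j * (s + real DIM('a)))" by (simp add: powr_powr)
    also have "\<dots> = 2 powr (real DIM('a) + ?j * s + (?j - 1) * real DIM('a))" using e by simp
    also have "\<dots> = 2 powr real DIM('a) * (2 powr ?j) powr s * 2 powr ((?j - 1) * real DIM('a))"
      by (simp add: powr_add powr_powr)
    finally have "(2 powr ?j) powr (s + real DIM('a)) = 2 powr real DIM('a) * (2 powr ?j) powr s * 2 powr ((?j - 1) * real DIM('a))" .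
    then show ?thesis unfolding c0_def using om_pos by (simp add: field_simps)
  qed
  finally show ?thesis .
qed

definition L :: "'a \<Rightarrow> real" where
  "L x = lim (\<lambda>n. ball_avg f x (2 powr (- real n)))"

definition c1 :: real where "c1 = c0 / (1 - 2 powr (- s))"

lemma q_lt: "2 powr (- s) < 1"
proof -
  have "2 powr (- s) < 2 powr 0" by (rule powr_less_mono) (use spos in auto)
  then show ?thesis by simp
qed

lemma c1_pos: "c1 > 0" unfolding c1_def using c0_pos q_lt by simp

lemma conv_K:
  fixes K :: int
  assumes "gD x \<le> ennreal G" "G \<ge> 0"
  defines "b \<equiv> \<lambda>n. ball_avg f x (2 powr (real_of_int K - real n))"
  shows "b \<longlonglongrightarrow> b 0 + (\<Sum>n. b (Suc n) - b n)"
    and "\<bar>(\<Sum>n. b (Suc n) - b n)\<bar> \<le> c1 * G * (2 powr real_of_int K) powr s"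
proof -
  have d: "\<bar>b (Suc n) - b n\<bar> \<le> (c0 * G * (2 powr real_of_int K) powr s) * (2 powr (- s)) ^ n" for n
  proof -
    have "\<bar>b (Suc n) - b n\<bar> \<le> c0 * G * (2 powr real_of_int (K - int n)) powr s"
      using step[OF assms(1,2), of "K - int n"] unfolding b_def by (simp add: algebra_simps)
    also have "(2 powr real_of_int (K - int n)) powr s = (2 powr real_of_int K) powr s * (2 powr (- s)) ^ n"
      by (simp add: pow2_pow powr_powr powr_add[symmetric] algebra_simps)
    finally show ?thesis by (simp add: mult_ac)
  qed
  note g = geom_conv[OF d _ q_lt]
  show "b \<longlonglongrightarrow> b 0 + (\<Sum>n. b (Suc n) - b n)" using g(1) by simp
  show "\<bar>(\<Sum>n. b (Suc n) - b n)\<bar> \<le> c1 * G * (2 powr real_of_int K) powr s"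
    using g(2) by (simp add: c1_def field_simps)
qed

lemma L_close:
  assumes "gD x \<le> ennreal G" "G \<ge> 0"
  shows "(\<lambda>n. ball_avg f x (2 powr (real_of_int K - real n))) \<longlonglongrightarrow> L x"
    and "\<bar>L x - ball_avg f x (2 powr real_of_int K)\<bar> \<le> c1 * G * (2 powr real_of_int K) powr s"
proof -
  define a where "a = (\<lambda>n. ball_avg f x (2 powr (- real n)))"
  define b where "b = (\<lambda>n. ball_avg f x (2 powr (real_of_int K - real n)))"
  have a0: "a = (\<lambda>n. ball_avg f x (2 powr (real_of_int 0 - real n)))" unfolding a_def by simp
  obtain la where la: "a \<longlonglongrightarrow> la" using conv_K(1)[OF assms, of 0] unfolding a0[symmetric] by blast
  have La: "L x = la" unfolding L_def a_def[symmetric] using la by (rule limI)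
  have cb: "b \<longlonglongrightarrow> b 0 + (\<Sum>n. b (Suc n) - b n)"
     and cb2: "\<bar>(\<Sum>n. b (Suc n) - b n)\<bar> \<le> c1 * G * (2 powr real_of_int K) powr s"
    using conv_K[OF assms, of K] unfolding b_def by simp_all
  define lb where "lb = b 0 + (\<Sum>n. b (Suc n) - b n)"
  have lb: "b \<longlonglongrightarrow> lb" and lbd: "\<bar>lb - b 0\<bar> \<le> c1 * G * (2 powr real_of_int K) powr s"
    using cb cb2 unfolding lb_def by simp_all
  have "lb = la"
  proof (cases "K \<ge> 0")
    case True
    have "(\<lambda>n. b (n + nat K)) = a" unfolding a_def b_def using True by (auto simp: algebra_simps)
    then have "a \<longlonglongrightarrow> lb" using LIMSEQ_ignore_initial_segment[OF lb, of "nat K"] by simp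
    then show ?thesis using la LIMSEQ_unique by metis
  next
    case False
    have "(\<lambda>n. a (n + nat (- K))) = b" unfolding a_def b_def using False by (auto simp: algebra_simps)
    then have "b \<longlonglongrightarrow> la" using LIMSEQ_ignore_initial_segment[OF la, of "nat (-K)"] by simp
    then show ?thesis using lb LIMSEQ_unique by metis
  qed
  then show "(\<lambda>n. ball_avg f x (2 powr (real_of_int K - real n))) \<longlonglongrightarrow> L x"
    using lb La unfolding b_def by simp
  show "\<bar>L x - ball_avg f x (2 powr real_of_int K)\<bar> \<le> c1 * G * (2 powr real_of_int K) powr s"
    using lbd \<open>lb = la\<close> La unfolding b_def by simp
qed

end

context sharp begin

definition c2 :: real where "c2 = c1 * 2 powr s + 2 powr (s + real DIM('a)) / om"
definition c3 :: real where "c3 = c2 * 2 powr s"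

lemma c3_pos: "c3 > 0" unfolding c3_def c2_def using c1_pos om_pos by (simp add: add_pos_pos)

lemma L_pair:
  assumes gx: "gD x \<le> ennreal Gx" and gy: "gD y \<le> ennreal Gy" and G0: "Gx \<ge> 0" "Gy \<ge> 0"
    and xy: "x \<noteq> y"
  shows "\<bar>L x - L y\<bar> \<le> c3 * (Gx + Gy) * dist x y powr s"
proof -
  define d where "d = dist x y"
  have d0: "d > 0" using xy unfolding d_def by simp
  define K where "K = \<lceil>log 2 d\<rceil>"
  define \<rho> where "\<rho> = 2 powr real_of_int K"
  have \<rho>0: "\<rho> > 0" unfolding \<rho>_def by simp
  have "d = 2 powr (log 2 d)" using d0 by simp
  also have "\<dots> \<le> \<rho>" unfolding \<rho>_def K_def by (intro powr_mono) auto
  finally have d\<rho>: "d \<le> \<rho>" .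
  have "\<rho> < 2 powr (log 2 d + 1)" unfolding \<rho>_def K_def by (intro powr_less_mono) linarith+
  also have "\<dots> = 2 * d" using d0 by (simp add: powr_add)
  finally have \<rho>d: "\<rho> < 2 * d" .
  have \<rho>K1: "2 powr real_of_int (K + 1) = 2 * \<rho>" unfolding \<rho>_def by (simp add: powr_add)
  have sub: "ball y \<rho> \<subseteq> ball x (2 powr real_of_int (K + 1))"
    unfolding \<rho>K1 using d\<rho> unfolding d_def
    by (auto simp: dist_commute) (metis dist_commute dist_triangle add_le_less_mono order_le_less_trans mult_2)
  have A: "\<bar>ball_avg f y \<rho> - ball_avg f x (2 powr real_of_int (K + 1))\<bar>
      \<le> osc x (2 powr real_of_int (K + 1)) / measure lebesgue (ball y \<rho>)"
    unfolding osc_def by (rule avg_cmp[OF sub \<rho>0])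
  also have "\<dots> \<le> Gx * (2 * \<rho>) powr (s + real DIM('a)) / measure lebesgue (ball y \<rho>)"
    using osc_bound_gD[OF gx G0(1), of "K + 1"] unfolding \<rho>K1
    by (intro divide_right_mono) auto
  also have "\<dots> = Gx * (2 powr (s + real DIM('a)) / om) * \<rho> powr s"
  proof -
    have "(2 * \<rho>) powr (s + real DIM('a)) = 2 powr (s + real DIM('a)) * (\<rho> powr s * \<rho> powr real DIM('a))"
      using \<rho>0 by (simp add: powr_mult powr_add)
    moreover have "measure lebesgue (ball y \<rho>) = \<rho> powr real DIM('a) * om"
      using mball[of \<rho> y] \<rho>0 by (simp add: powr_realpow)
    ultimately show ?thesis using om_pos \<rho>0 by (simp add: field_simps)
  qed
  finally have A': "\<bar>ball_avg f y \<rho> - ball_avg f x (2 powr real_of_int (K + 1))\<bar> \<le> Gx * (2 powr (s + real DIM('a)) / om) * \<rho> powr s" .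
  have B: "\<bar>L x - ball_avg f x (2 powr real_of_int (K + 1))\<bar> \<le> c1 * Gx * (2 powr s * \<rho> powr s)"
    using L_close(2)[OF gx G0(1), of "K + 1"] unfolding \<rho>K1 using \<rho>0 by (simp add: powr_mult)
  have C: "\<bar>L y - ball_avg f y \<rho>\<bar> \<le> c1 * Gy * \<rho> powr s"
    using L_close(2)[OF gy G0(2), of K] unfolding \<rho>_def .
  have "\<bar>L x - L y\<bar> \<le> c1 * Gx * (2 powr s * \<rho> powr s) + Gx * (2 powr (s + real DIM('a)) / om) * \<rho> powr s + c1 * Gy * \<rho> powr s"
    using A' B C by linarith
  also have "\<dots> \<le> c2 * (Gx + Gy) * \<rho> powr s"
  proof -
    have two: "1 \<le> 2 powr s" using spos by (intro ge_one_powr_ge_zero) auto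
    have "c1 * (1 * Gy) \<le> c1 * (2 powr s * Gy)"
      using mult_left_mono[OF mult_right_mono[OF two G0(2)]] c1_pos by simp
    then have "c1 * Gy \<le> c1 * 2 powr s * Gy" by (simp add: mult.assoc)
    moreover have "0 \<le> Gy * (2 powr (s + real DIM('a)) / om)" using G0 om_pos by simp
    ultimately have "c1 * Gy \<le> c2 * Gy" unfolding c2_def by (simp add: algebra_simps)
    then have "c1 * Gy * \<rho> powr s \<le> c2 * Gy * \<rho> powr s" using \<rho>0 by (simp add: mult_right_mono)
    moreover have "c2 * (Gx + Gy) * \<rho> powr s = (c1 * Gx * (2 powr s * \<rho> powr s) + Gx * (2 powr (s + real DIM('a)) / om) * \<rho> powr s) + c2 * Gy * \<rho> powr s"
      unfolding c2_def using om_pos by (simp add: field_simps)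
    ultimately show ?thesis by linarith
  qed
  also have "\<dots> \<le> c2 * (Gx + Gy) * (2 powr s * d powr s)"
  proof -
    have "\<rho> powr s \<le> (2 * d) powr s" using \<rho>d \<rho>0 spos by (intro powr_mono2) auto
    then have "\<rho> powr s \<le> 2 powr s * d powr s" using d0 by (simp add: powr_mult)
    moreover have "c2 * (Gx + Gy) \<ge> 0" using c1_pos om_pos G0 unfolding c2_def by simp
    ultimately show ?thesis by (rule mult_left_mono)
  qed
  also have "\<dots> = c3 * (Gx + Gy) * dist x y powr s" unfolding c3_def d_def by simp
  finally show ?thesis .
qed

end

context sharp begin

definition c4 :: real where "c4 = 1 / om + c1"

lemma c4_pos: "c4 > 0" unfolding c4_def using om_pos c1_pos by (intro add_pos_pos) auto

lemma leb_pt: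
  assumes g: "gD x \<le> ennreal G" "G \<ge> 0"
  shows "(LINT y:ball x (2 powr real_of_int k)|lebesgue. \<bar>f y - L x\<bar>)
         \<le> c4 * G * (2 powr real_of_int k) powr s * measure lebesgue (ball x (2 powr real_of_int k))"
proof -
  define \<rho> where "\<rho> = 2 powr real_of_int k"
  have \<rho>0: "\<rho> > 0" unfolding \<rho>_def by simp
  define a where "a = ball_avg f x \<rho>"
  have "(LINT y:ball x \<rho>|lebesgue. \<bar>f y - L x\<bar>) \<le> (LINT y:ball x \<rho>|lebesgue. \<bar>f y - a\<bar> + \<bar>a - L x\<bar>)"
    by (intro set_integral_mono int_absdiff set_integral_add(1) int_const) auto
  also have "\<dots> = osc x \<rho> + measure lebesgue (ball x \<rho>) * \<bar>a - L x\<bar>"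
    unfolding osc_def a_def
    by (simp add: set_integral_add(2)[OF int_absdiff int_const] avg_const[OF \<rho>0])
  also have "\<dots> \<le> G * \<rho> powr (s + real DIM('a)) + measure lebesgue (ball x \<rho>) * (c1 * G * \<rho> powr s)"
  proof (intro add_mono mult_left_mono)
    show "osc x \<rho> \<le> G * \<rho> powr (s + real DIM('a))" unfolding \<rho>_def by (rule osc_bound_gD[OF g])
    show "\<bar>a - L x\<bar> \<le> c1 * G * \<rho> powr s" using L_close(2)[OF g, of k] unfolding a_def \<rho>_def by simp
  qed simp
  also have "\<dots> = c4 * G * \<rho> powr s * measure lebesgue (ball x \<rho>)"
    using mball[of \<rho> x] \<rho>0 om_pos unfolding c4_def
    by (simp add: powr_add powr_realpow field_simps)
  finally show ?thesis unfolding \<rho>_def .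
qed

definition S :: "nat \<Rightarrow> nat \<Rightarrow> 'a set" where
  "S M n = {x. gD x \<le> ennreal (real M) \<and> 1 / (real n + 1) < \<bar>f x - L x\<bar>}"

lemma powr_seq_0: "(\<lambda>m. (2 powr (- real m)) powr s) \<longlonglongrightarrow> 0"
proof -
  have "(\<lambda>m. (2 powr (- s)) ^ m) \<longlonglongrightarrow> 0" using q_lt by (intro LIMSEQ_power_zero) auto
  moreover have "(2 powr (- real m)) powr s = (2 powr (- s)) ^ m" for m
    by (simp add: pow2_pow powr_powr mult.commute)
  ultimately show ?thesis by simp
qed

lemma pow_seq_0: "(\<lambda>m. 2 powr (- real m)) \<longlonglongrightarrow> 0"
proof -
  have "(\<lambda>m. (1/2::real) ^ m) \<longlonglongrightarrow> 0" by (intro LIMSEQ_power_zero) auto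
  moreover have "2 powr (- real m) = (1/2) ^ m" for m
    by (simp add: powr_minus powr_realpow power_divide inverse_eq_divide)
  ultimately show ?thesis by simp
qed

lemma S_negligible: "negligible (S M n)"
proof (subst negligible_eq_zero_density, intro ballI allI impI)
  fix x and r e :: real
  assume xS: "x \<in> S M n" and r: "r > 0" and e: "e > 0"
  define \<epsilon> where "\<epsilon> = 1 / (real n + 1)"
  have \<epsilon>0: "\<epsilon> > 0" unfolding \<epsilon>_def by simp
  have gx: "gD x \<le> ennreal (real M)" and fx: "\<epsilon> < \<bar>f x - L x\<bar>" using xS unfolding S_def \<epsilon>_def by auto
  have ev1: "\<forall>\<^sub>F m in sequentially. 2 powr (- real m) < r"
    using order_tendstoD(2)[OF pow_seq_0 r] .
  have t2: "(\<lambda>m. c3 * (2 * real M) * (2 powr (- real m)) powr s) \<longlonglongrightarrow> 0"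
    using tendsto_mult_left[OF powr_seq_0, of "c3 * (2 * real M)"] by simp
  have ev2: "\<forall>\<^sub>F m in sequentially. c3 * (2 * real M) * (2 powr (- real m)) powr s < \<epsilon> / 2"
    by (rule order_tendstoD(2)[OF t2]) (use \<epsilon>0 in simp)
  have t3: "(\<lambda>m. (2 / \<epsilon>) * c4 * real M * (2 powr (- real m)) powr s) \<longlonglongrightarrow> 0"
    using tendsto_mult_left[OF powr_seq_0, of "(2 / \<epsilon>) * c4 * real M"] by simp
  have ev3: "\<forall>\<^sub>F m in sequentially. (2 / \<epsilon>) * c4 * real M * (2 powr (- real m)) powr s < e"
    using order_tendstoD(2)[OF t3 e] .
  obtain m where m1: "2 powr (- real m) < r"
    and m2: "c3 * (2 * real M) * (2 powr (- real m)) powr s < \<epsilon> / 2"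
    and m3: "(2 / \<epsilon>) * c4 * real M * (2 powr (- real m)) powr s < e"
    using eventually_happens'[OF sequentially_bot, OF eventually_conj[OF ev1 eventually_conj[OF ev2 ev3]]] by blast
  define d where "d = 2 powr (- real m)"
  have d0: "d > 0" unfolding d_def by simp
  have dk: "d = 2 powr real_of_int (- int m)" unfolding d_def by simp
  define U where "U = {y \<in> ball x d. \<epsilon> / 2 \<le> \<bar>f y - L x\<bar>}"
  note f_meas[measurable]
  have [measurable]: "ball x d \<in> sets lebesgue" by (rule ball_lmeas)
  have Us: "U \<in> sets lebesgue" unfolding U_def by measurable
  have Ul: "U \<in> lmeasurable" by (rule fmeasurableI2[OF lmeasurable_ball _ Us]) (auto simp: U_def)
  have sub: "S M n \<inter> ball x d \<subseteq> U"
  proof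
    fix y assume y: "y \<in> S M n \<inter> ball x d"
    have gy: "gD y \<le> ennreal (real M)" and fy: "\<epsilon> < \<bar>f y - L y\<bar>" using y unfolding S_def \<epsilon>_def by auto
    have "\<bar>L y - L x\<bar> \<le> \<epsilon> / 2"
    proof (cases "y = x")
      case False
      have "\<bar>L x - L y\<bar> \<le> c3 * (real M + real M) * dist x y powr s"
        by (rule L_pair[OF gx gy _ _ False[symmetric]]) auto
      also have "\<dots> \<le> c3 * (2 * real M) * d powr s"
      proof -
        have "dist x y powr s \<le> d powr s" using y spos by (intro powr_mono2) auto
        then show ?thesis using c3_pos by (simp add: mult_left_mono)
      qed
      also have "\<dots> \<le> \<epsilon> / 2" using m2 unfolding d_def by simp
      finally show ?thesis by (simp add: abs_minus_commute)
    qed (use \<epsilon>0 in simp)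
    then have "\<epsilon> / 2 \<le> \<bar>f y - L x\<bar>" using fy by linarith
    then show "y \<in> U" using y unfolding U_def by auto
  qed
  have mB: "measure lebesgue (ball x d) > 0" using mball_pos[OF d0] .
  have "measure lebesgue U \<le> (LINT y:ball x d|lebesgue. \<bar>f y - L x\<bar>) / (\<epsilon> / 2)"
    unfolding U_def using \<epsilon>0
    by (intro integral_Markov_inequality'_measure int_absdiff) auto
  also have "\<dots> \<le> (c4 * real M * d powr s * measure lebesgue (ball x d)) / (\<epsilon> / 2)"
    using \<epsilon>0 leb_pt[OF gx _, of "- int m"] unfolding dk[symmetric] by (intro divide_right_mono) auto
  also have "\<dots> = ((2 / \<epsilon>) * c4 * real M * d powr s) * measure lebesgue (ball x d)"
    by (simp add: field_simps)
  also have "\<dots> < e * measure lebesgue (ball x d)"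
    using m3 mB unfolding d_def by (intro mult_strict_right_mono) auto
  finally have "measure lebesgue U < e * measure lebesgue (ball x d)" .
  then show "\<exists>d>0. d \<le> r \<and> (\<exists>U. S M n \<inter> ball x d \<subseteq> U \<and> U \<in> lmeasurable \<and> measure lebesgue U < e * measure lebesgue (ball x d))"
    using d0 m1 sub Ul unfolding d_def by (intro exI[of _ d] conjI) (auto simp: d_def)
qed
end

context sharp begin

lemma bad_negligible: "negligible {x. gD x < \<infinity> \<and> f x \<noteq> L x}"
proof -
  have "{x. gD x < \<infinity> \<and> f x \<noteq> L x} \<subseteq> \<Union>(range (\<lambda>(M, n). S M n))"
  proof
    fix x assume x: "x \<in> {x. gD x < \<infinity> \<and> f x \<noteq> L x}"
    then obtain G where G: "gD x = ennreal G" "G \<ge> 0" using less_top_ennreal x by auto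
    obtain M :: nat where "G \<le> real M" using real_arch_simple by blast
    then have gM: "gD x \<le> ennreal (real M)" using G by simp
    have "\<bar>f x - L x\<bar> > 0" using x by simp
    then obtain n where "inverse (real (Suc n)) < \<bar>f x - L x\<bar>" using reals_Archimedean by blast
    then have "1 / (real n + 1) < \<bar>f x - L x\<bar>" by (simp add: inverse_eq_divide add.commute)
    then have "x \<in> S M n" using gM unfolding S_def by simp
    then show "x \<in> \<Union>(range (\<lambda>(M, n). S M n))" by blast
  qed
  moreover have "negligible (\<Union>(range (\<lambda>(M, n). S M n)))"
    by (rule negligible_countable_Union) (auto intro: S_negligible)
  ultimately show ?thesis using negligible_subset by blast
qed

definition fB :: "'a \<Rightarrow> real" where
  "fB = (SOME g. g \<in> borel_measurable lborel \<and> (AE x in lborel. f x = g x))"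

lemma fB: "fB \<in> borel_measurable lborel" "AE x in lebesgue. f x = fB x"
proof -
  have "\<exists>g. g \<in> borel_measurable lborel \<and> (AE x in lborel. f x = g x)"
    using completion_ex_borel_measurable_real[OF f_meas] by blast
  then have "fB \<in> borel_measurable lborel \<and> (AE x in lborel. f x = fB x)"
    unfolding fB_def by (rule someI_ex)
  then show "fB \<in> borel_measurable lborel" "AE x in lebesgue. f x = fB x"
    by (auto intro: AE_completion)
qed

lemma fB_meas[measurable]: "fB \<in> borel_measurable lborel" by (rule fB(1))

lemma mball_const: "measure lebesgue (ball (x::'a) r) = measure lebesgue (ball (0::'a) r)"
  by (cases "r \<ge> 0") (use mball[of r x] mball[of r 0] in \<open>auto simp: ball_empty\<close>)

lemma fB_leb: "fB \<in> borel_measurable lebesgue"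
  by (rule measurable_completion[OF fB_meas])

lemma ballB[measurable]: "ball x r \<in> sets lborel" by simp

lemma ballL: "ball x r \<in> sets lebesgue" by simp

lemma avg_eq: "ball_avg f x r = (\<integral>y. indicator (ball x r) y * fB y \<partial>lborel) / measure lebesgue (ball (0::'a) r)"
proof -
  have "(LINT y:ball x r|lebesgue. f y) = (\<integral>y. indicator (ball x r) y * fB y \<partial>lebesgue)"
  proof -
    note fB_leb[measurable] f_meas[measurable] ballL[measurable]
    show ?thesis unfolding set_lebesgue_integral_def using fB(2) by (intro integral_cong_AE) (measurable, auto)
  qed
  also have "\<dots> = (\<integral>y. indicator (ball x r) y * fB y \<partial>lborel)"
    by (rule integral_completion) measurable
  finally show ?thesis unfolding ball_avg_def mball_const[of x r] by simp
qed

lemma ind_meas[measurable]: "(\<lambda>p::'a\<times>'a. indicator (ball (fst p) r) (snd p) :: real) \<in> borel_measurable (lborel \<Otimes>\<^sub>M lborel)"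
proof -
  have o: "open {p::'a\<times>'a. dist (fst p) (snd p) < r}"
    by (intro open_Collect_less continuous_intros)
  have "(\<lambda>p::'a\<times>'a. indicator (ball (fst p) r) (snd p) :: real) = indicator {p. dist (fst p) (snd p) < r}"
    by (auto simp: indicator_def)
  also have "\<dots> \<in> borel_measurable (lborel \<Otimes>\<^sub>M lborel)"
    unfolding lborel_prod using o by (intro borel_measurable_indicator) auto
  finally show ?thesis .
qed

lemma avg_meas[measurable]: "(\<lambda>x. ball_avg f x r) \<in> borel_measurable lborel"
  unfolding avg_eq by measurable

lemma osc_eq: "osc x r = (\<integral>y. indicator (ball x r) y * \<bar>fB y - ball_avg f x r\<bar> \<partial>lborel)"
proof -
  have "osc x r = (\<integral>y. indicator (ball x r) y * \<bar>fB y - ball_avg f x r\<bar> \<partial>lebesgue)"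
  proof -
    note fB_leb[measurable] f_meas[measurable] ballL[measurable]
    show ?thesis unfolding osc_def set_lebesgue_integral_def using fB(2) by (intro integral_cong_AE) (measurable, auto)
  qed
  also have "\<dots> = (\<integral>y. indicator (ball x r) y * \<bar>fB y - ball_avg f x r\<bar> \<partial>lborel)"
    by (rule integral_completion) measurable
  finally show ?thesis .
qed

lemma osc_meas[measurable]: "(\<lambda>x. osc x r) \<in> borel_measurable lborel"
  unfolding osc_eq by measurable

lemma T_eq': "T x r = ennreal (1 / r powr (s + real DIM('a))) * ennreal (osc x r)"
  unfolding T_def nn_osc ..

lemma gD_meas[measurable]: "gD \<in> borel_measurable lborel"
  unfolding gD_def T_eq' by measurable

end

lemma enn_powr_meas[measurable]:
  assumes [measurable]: "g \<in> borel_measurable M"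
  shows "(\<lambda>x. enn_powr (g x) q) \<in> borel_measurable M"
  unfolding enn_powr_def by measurable

lemma powr_pow_DIM:
  assumes "a \<ge> (0::real)" "p > 0"
  shows "(a powr (p / real DIM('a::euclidean_space))) ^ DIM('a) = a powr p"
proof (cases "a = 0")
  case True then show ?thesis using assms by simp
next
  case False
  then have "a > 0" using assms by simp
  then show ?thesis by (simp add: powr_realpow[symmetric] powr_powr)
qed

lemma dist_meas[measurable]: "(\<lambda>p::'a::euclidean_space\<times>'a. dist (fst p) (snd p)) \<in> borel_measurable (lborel \<Otimes>\<^sub>M lborel)"
  unfolding lborel_prod measurable_lborel2
  by (intro borel_measurable_continuous_onI continuous_intros)

lemma leb_prod:
  assumes "X \<in> sets (lborel \<Otimes>\<^sub>M lborel)"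
  shows "X \<in> sets (lebesgue :: ('a::euclidean_space \<times> 'a) measure)"
    and "emeasure (lebesgue :: ('a \<times> 'a) measure) X = emeasure (lborel \<Otimes>\<^sub>M lborel) X"
proof -
  have X: "X \<in> sets (lborel :: ('a \<times> 'a) measure)" using assms unfolding lborel_prod .
  show "X \<in> sets (lebesgue :: ('a \<times> 'a) measure)" using X by (rule sets_completionI_sets)
  show "emeasure (lebesgue :: ('a \<times> 'a) measure) X = emeasure (lborel \<Otimes>\<^sub>M lborel) X"
    unfolding lborel_prod using X by (subst emeasure_completion) auto
qed

context sharp begin

lemma eball: "r \<ge> 0 \<Longrightarrow> emeasure lborel (ball (x::'a) r) = ennreal (r ^ DIM('a) * om)"
proof -
  assume r: "r \<ge> 0"
  have "emeasure lborel (ball x r) = ennreal (measure lborel (ball x r))"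
    using emeasure_lborel_ball_finite[of x r] by (intro emeasure_eq_ennreal_measure) auto
  also have "measure lborel (ball x r) = r ^ DIM('a) * om"
    unfolding om_def by (rule content_ball_conv_unit_ball[OF r])
  finally show ?thesis .
qed

end

context sharp begin

definition Rt :: "real \<Rightarrow> real \<Rightarrow> 'a \<Rightarrow> real" where
  "Rt p t x = (2 * c3 * enn2real (gD x) / t) powr (p / real DIM('a))"

lemma Rt_meas[measurable]: "Rt p t \<in> borel_measurable lborel"
  unfolding Rt_def by measurable

lemma enn_powr_ge: "ennreal (enn2real a powr p) \<le> enn_powr a p"
  unfolding enn_powr_def by auto

lemma ball_int:
  assumes p: "p > 0" and t: "t > 0"
  shows "(\<integral>\<^sup>+x. emeasure lborel (ball x (Rt p t x)) \<partial>lborel)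
    \<le> ennreal (om * (2 * c3 / t) powr p) * (\<integral>\<^sup>+x. enn_powr (gD x) p \<partial>lborel)"
proof -
  have pt: "emeasure lborel (ball x (Rt p t x)) \<le> ennreal (om * (2 * c3 / t) powr p) * enn_powr (gD x) p" for x
  proof -
    define G where "G = enn2real (gD x)"
    have G0: "G \<ge> 0" unfolding G_def by simp
    have a0: "2 * c3 * G / t \<ge> 0" using c3_pos t G0 by simp
    have "emeasure lborel (ball x (Rt p t x)) = ennreal ((2 * c3 * G / t) powr p * om)"
      unfolding Rt_def G_def[symmetric] by (subst eball) (simp_all add: powr_pow_DIM[OF a0 p])
    also have "(2 * c3 * G / t) powr p = (2 * c3 / t) powr p * G powr p"
    proof -
      have "2 * c3 * G / t = (2 * c3 / t) * G" by simp
      moreover have "((2 * c3 / t) * G) powr p = (2 * c3 / t) powr p * G powr p"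
        using c3_pos t G0 by (intro powr_mult; auto)
      ultimately show ?thesis by simp
    qed
    also have "ennreal ((2 * c3 / t) powr p * G powr p * om) = ennreal (om * (2 * c3 / t) powr p) * ennreal (G powr p)"
      using om_pos by (simp add: ennreal_mult[symmetric] mult_ac)
    also have "\<dots> \<le> ennreal (om * (2 * c3 / t) powr p) * enn_powr (gD x) p"
      unfolding G_def by (intro mult_left_mono enn_powr_ge) auto
    finally show ?thesis .
  qed
  have "(\<integral>\<^sup>+x. emeasure lborel (ball x (Rt p t x)) \<partial>lborel) \<le> (\<integral>\<^sup>+x. ennreal (om * (2 * c3 / t) powr p) * enn_powr (gD x) p \<partial>lborel)"
    by (intro nn_integral_mono pt)
  also have "\<dots> = ennreal (om * (2 * c3 / t) powr p) * (\<integral>\<^sup>+x. enn_powr (gD x) p \<partial>lborel)"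
    by (rule nn_integral_cmult) measurable
  finally show ?thesis .
qed

end

context sharp begin

lemma weak_est:
  assumes p: "p > 1" and I: "(\<integral>\<^sup>+x. enn_powr (gD x) p \<partial>lborel) \<noteq> \<infinity>" and t: "t > 0"
  shows "emeasure (lebesgue :: ('a \<times> 'a) measure)
      {z \<in> space lebesgue. t < \<bar>(\<lambda>(x, y). (f x - f y) / norm (x - y) powr (real DIM('a) / p + s)) z\<bar>}
    \<le> ennreal (2 * (om * (2 * c3 / t) powr p)) * (\<integral>\<^sup>+x. enn_powr (gD x) p \<partial>lborel)"
proof -
  let ?E = "{z \<in> space (lebesgue :: ('a \<times> 'a) measure). t < \<bar>(\<lambda>(x, y). (f x - f y) / norm (x - y) powr (real DIM('a) / p + s)) z\<bar>}"
  let ?K = "ennreal (om * (2 * c3 / t) powr p)"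
  let ?I = "(\<integral>\<^sup>+x. enn_powr (gD x) p \<partial>lborel)"
  have p0: "p > 0" using p by simp
  have AEfin: "AE x in lborel. enn_powr (gD x) p \<noteq> \<infinity>"
    by (rule nn_integral_PInf_AE) (measurable, rule I)
  have "{x \<in> space lborel. \<not> enn_powr (gD x) p \<noteq> \<infinity>} \<in> null_sets lborel"
    using AEfin by (subst AE_iff_null[symmetric]) measurable
  moreover have "{x \<in> space lborel. \<not> enn_powr (gD x) p \<noteq> \<infinity>} = {x. gD x = \<infinity>}"
    unfolding enn_powr_def by auto
  ultimately have Z1: "{x. gD x = \<infinity>} \<in> null_sets lborel" by simp
  have "{x. gD x < \<infinity> \<and> f x \<noteq> L x} \<in> null_sets lebesgue"
    using bad_negligible by (simp add: negligible_iff_null_sets)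
  then obtain N where N: "N \<in> null_sets lborel" "{x. gD x < \<infinity> \<and> f x \<noteq> L x} \<subseteq> N"
    unfolding null_sets_completion_iff2 by blast
  define Z where "Z = {x. gD x = \<infinity>} \<union> N"
  have Z: "Z \<in> null_sets lborel" unfolding Z_def using Z1 N(1) by auto
  define A1 where "A1 = {z::'a \<times> 'a. dist (fst z) (snd z) < Rt p t (fst z)}"
  define A2 where "A2 = {z::'a \<times> 'a. dist (fst z) (snd z) < Rt p t (snd z)}"
  have "Measurable.pred (lborel \<Otimes>\<^sub>M lborel) (\<lambda>z::'a\<times>'a. dist (fst z) (snd z) < Rt p t (fst z))"
    by measurable
  then have A1m: "A1 \<in> sets (lborel \<Otimes>\<^sub>M lborel)" unfolding A1_def pred_def by (simp add: space_pair_measure)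
  have "Measurable.pred (lborel \<Otimes>\<^sub>M lborel) (\<lambda>z::'a\<times>'a. dist (fst z) (snd z) < Rt p t (snd z))"
    by measurable
  then have A2m: "A2 \<in> sets (lborel \<Otimes>\<^sub>M lborel)" unfolding A2_def pred_def by (simp add: space_pair_measure)
  have Z1m: "Z \<times> UNIV \<in> null_sets (lborel \<Otimes>\<^sub>M lborel)" using Z by (intro lborel.times_in_null_sets1) auto
  have Z2m: "UNIV \<times> Z \<in> null_sets (lborel \<Otimes>\<^sub>M lborel)" using Z by (intro lborel.times_in_null_sets2) auto
  have sub: "?E \<subseteq> ((Z \<times> UNIV \<union> UNIV \<times> Z) \<union> A1) \<union> A2"
  proof
    fix z assume zE: "z \<in> ?E"
    obtain x y where z: "z = (x, y)" by (cases z)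
    show "z \<in> ((Z \<times> UNIV \<union> UNIV \<times> Z) \<union> A1) \<union> A2"
    proof (rule ccontr)
    assume nz: "z \<notin> ((Z \<times> UNIV \<union> UNIV \<times> Z) \<union> A1) \<union> A2"
    have E: "(x, y) \<in> ?E" using zE z by simp
    have nA2: "(x, y) \<notin> A2" and nA1: "(x, y) \<notin> A1"
      and nZ: "(x, y) \<notin> Z \<times> UNIV" "(x, y) \<notin> UNIV \<times> Z" using nz z by auto
    have xZ: "x \<notin> Z" and yZ: "y \<notin> Z" using nZ by auto
    have gx: "gD x \<noteq> \<infinity>" and gy: "gD y \<noteq> \<infinity>" using xZ yZ unfolding Z_def by auto
    have fx: "f x = L x" using xZ gx N(2) unfolding Z_def by (auto simp: less_top)
    have fy: "f y = L y" using yZ gy N(2) unfolding Z_def by (auto simp: less_top)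
    define Gx where "Gx = enn2real (gD x)"
    define Gy where "Gy = enn2real (gD y)"
    have Gx: "gD x \<le> ennreal Gx" "Gx \<ge> 0" unfolding Gx_def using gx by (auto simp: less_top[symmetric] ennreal_enn2real)
    have Gy: "gD y \<le> ennreal Gy" "Gy \<ge> 0" unfolding Gy_def using gy by (auto simp: less_top[symmetric] ennreal_enn2real)
    have Et: "t < \<bar>f x - f y\<bar> / norm (x - y) powr (real DIM('a) / p + s)"
      using E by (simp add: abs_divide)
    have xy: "x \<noteq> y" using Et t by auto
    define d where "d = dist x y"
    have d0: "d > 0" using xy unfolding d_def by simp
    have nd: "norm (x - y) = d" unfolding d_def by (simp add: dist_norm)
    have hL: "\<bar>f x - f y\<bar> \<le> c3 * (Gx + Gy) * d powr s"
      using L_pair[OF Gx(1) Gy(1) Gx(2) Gy(2) xy] fx fy unfolding d_def by simp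
    have "t * (d powr (real DIM('a) / p) * d powr s) < \<bar>f x - f y\<bar>"
      using Et d0 unfolding nd by (simp add: powr_add pos_less_divide_eq)
    also have "\<dots> \<le> c3 * (Gx + Gy) * d powr s" by (rule hL)
    finally have "(t * d powr (real DIM('a) / p)) * d powr s < (c3 * (Gx + Gy)) * d powr s"
      by (simp add: mult_ac)
    then have lt: "t * d powr (real DIM('a) / p) < c3 * (Gx + Gy)"
      using d0 by (simp add: mult_less_cancel_right)
    have key: "d < Rt p t z'" if "gD z' \<noteq> \<infinity>" "t * d powr (real DIM('a) / p) < 2 * c3 * enn2real (gD z')" for z'
    proof -
      have q: "real DIM('a) / p > 0" using p0 by simp
      have "d powr (real DIM('a) / p) < 2 * c3 * enn2real (gD z') / t" using that(2) t by (simp add: field_simps)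
      then have "(d powr (real DIM('a) / p)) powr (p / real DIM('a)) < (2 * c3 * enn2real (gD z') / t) powr (p / real DIM('a))"
        using p0 by (intro powr_less_mono2) auto
      moreover have "(d powr (real DIM('a) / p)) powr (p / real DIM('a)) = d"
        using d0 p0 by (simp add: powr_powr)
      ultimately show ?thesis unfolding Rt_def by simp
    qed
    show False
    proof (cases "Gy \<le> Gx")
      case True
      then have "t * d powr (real DIM('a) / p) < 2 * c3 * enn2real (gD x)"
      proof -
        have "c3 * (Gx + Gy) \<le> c3 * (2 * Gx)" using True c3_pos by (intro mult_left_mono) auto
        then show ?thesis using lt unfolding Gx_def[symmetric] by (simp add: mult_ac)
      qed
      then have "d < Rt p t x" using key[OF gx] by blast
      then show False using nA1 unfolding A1_def d_def by simp
    next
      case False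
      then have "t * d powr (real DIM('a) / p) < 2 * c3 * enn2real (gD y)"
      proof -
        have "c3 * (Gx + Gy) \<le> c3 * (2 * Gy)" using False c3_pos by (intro mult_left_mono) auto
        then show ?thesis using lt unfolding Gy_def[symmetric] by (simp add: mult_ac)
      qed
      then have "d < Rt p t y" using key[OF gy] by blast
      then show False using nA2 unfolding A2_def d_def by simp
    qed
    qed
  qed
  have bigm: "((Z \<times> UNIV \<union> UNIV \<times> Z) \<union> A1) \<union> A2 \<in> sets (lborel \<Otimes>\<^sub>M lborel)"
    using A1m A2m null_setsD2[OF Z1m] null_setsD2[OF Z2m] by (intro sets.Un)
  have "emeasure lebesgue ?E \<le> emeasure (lebesgue :: ('a \<times> 'a) measure) (((Z \<times> UNIV \<union> UNIV \<times> Z) \<union> A1) \<union> A2)"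
    by (rule emeasure_mono[OF sub leb_prod(1)[OF bigm]])
  also have "\<dots> = emeasure (lborel \<Otimes>\<^sub>M lborel) (((Z \<times> UNIV \<union> UNIV \<times> Z) \<union> A1) \<union> A2)"
    by (rule leb_prod(2)[OF bigm])
  also have "\<dots> \<le> emeasure (lborel \<Otimes>\<^sub>M lborel) ((Z \<times> UNIV \<union> UNIV \<times> Z) \<union> A1) + emeasure (lborel \<Otimes>\<^sub>M lborel) A2"
    by (rule emeasure_subadditive[OF _ A2m]) (use A1m null_setsD2[OF Z1m] null_setsD2[OF Z2m] in \<open>intro sets.Un\<close>)
  also have "emeasure (lborel \<Otimes>\<^sub>M lborel) ((Z \<times> UNIV \<union> UNIV \<times> Z) \<union> A1) + emeasure (lborel \<Otimes>\<^sub>M lborel) A2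
      = (\<integral>\<^sup>+x. emeasure lborel (ball x (Rt p t x)) \<partial>lborel) + (\<integral>\<^sup>+y. emeasure lborel (ball y (Rt p t y)) \<partial>lborel)"
  proof -
    have Nn: "Z \<times> UNIV \<union> UNIV \<times> Z \<in> null_sets (lborel \<Otimes>\<^sub>M lborel)" using Z1m Z2m by (rule null_sets.Un)
    have "emeasure (lborel \<Otimes>\<^sub>M lborel) (A1 \<union> (Z \<times> UNIV \<union> UNIV \<times> Z)) = emeasure (lborel \<Otimes>\<^sub>M lborel) A1"
      by (rule emeasure_Un_null_set[OF A1m Nn])
    then have e0: "emeasure (lborel \<Otimes>\<^sub>M lborel) ((Z \<times> UNIV \<union> UNIV \<times> Z) \<union> A1) = emeasure (lborel \<Otimes>\<^sub>M lborel) A1"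
      by (simp add: Un_commute)
    have e1: "emeasure (lborel \<Otimes>\<^sub>M lborel) A1 = (\<integral>\<^sup>+x. emeasure lborel (ball x (Rt p t x)) \<partial>lborel)"
      using A1m by (subst lborel.emeasure_pair_measure_alt) (auto simp: A1_def ball_def vimage_def)
    have e2: "emeasure (lborel \<Otimes>\<^sub>M lborel) A2 = (\<integral>\<^sup>+y. emeasure lborel (ball y (Rt p t y)) \<partial>lborel)"
      using A2m by (subst lborel_pair.emeasure_pair_measure_alt2) (auto simp: A2_def ball_def vimage_def dist_commute)
    show ?thesis using e0 e1 e2 by simp
  qed
  also have "(\<integral>\<^sup>+x. emeasure lborel (ball x (Rt p t x)) \<partial>lborel) + (\<integral>\<^sup>+y. emeasure lborel (ball y (Rt p t y)) \<partial>lborel)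
      \<le> ?K * ?I + ?K * ?I"
    using ball_int[OF p0 t] by (intro add_mono) auto
  also have "?K * ?I + ?K * ?I = ennreal (2 * (om * (2 * c3 / t) powr p)) * ?I"
  proof -
    have A0: "om * (2 * c3 / t) powr p \<ge> 0" using om_pos by simp
    have "?K * ?I + ?K * ?I = 2 * (?K * ?I)" by (rule mult_2[symmetric])
    also have "\<dots> = (ennreal 2 * ?K) * ?I" by (simp add: mult.assoc)
    also have "ennreal 2 * ?K = ennreal (2 * (om * (2 * c3 / t) powr p))"
      by (rule ennreal_mult[symmetric]) (use A0 in auto)
    finally show ?thesis .
  qed
  finally show ?thesis .
qed

end


lemma enn_powr_mono:
  assumes "a \<le> b" "q \<ge> 0"
  shows "enn_powr a q \<le> enn_powr b q"
proof (cases "b = top")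
  case True then show ?thesis by (simp add: enn_powr_def)
next
  case False
  then have a: "a \<noteq> top" using assms(1) top.extremum_unique by auto
  have "enn2real a \<le> enn2real b" using assms(1) False by (intro enn2real_mono) (auto simp: less_top)
  then have "enn2real a powr q \<le> enn2real b powr q" using assms(2) by (intro powr_mono2) auto
  then show ?thesis using a False by (simp add: enn_powr_def)
qed

lemma enn_powr_ennreal: "x \<ge> 0 \<Longrightarrow> enn_powr (ennreal x) q = ennreal (x powr q)"
  by (simp add: enn_powr_def)

context sharp begin

lemma final:
  assumes p: "p > 1"
  shows "weak_Lp_norm p (lebesgue :: ('a \<times> 'a) measure)
      (\<lambda>(x, y). (f x - f y) / norm (x - y) powr (real DIM('a) / p + s))
    \<le> ennreal ((2 * om * (2 * c3) powr p) powr (1 / p)) * Lp_norm p lebesgue (sharp_max s f)"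
proof -
  define C where "C = (2 * om * (2 * c3) powr p) powr (1 / p)"
  have p0: "p > 0" using p by simp
  have K0: "2 * om * (2 * c3) powr p > 0" using om_pos c3_pos by simp
  have C0: "C > 0" unfolding C_def using K0 om_pos c3_pos by simp
  have CP: "C powr p = 2 * om * (2 * c3) powr p" unfolding C_def using K0 p0 by (simp add: powr_powr)
  define I where "I = (\<integral>\<^sup>+x. enn_powr (gD x) p \<partial>lborel)"
  have LpgD: "Lp_norm p lebesgue gD = enn_powr I (1 / p)"
    unfolding Lp_norm_def I_def nn_integral_completion ..
  have mono: "Lp_norm p lebesgue gD \<le> Lp_norm p lebesgue (sharp_max s f)"
    unfolding Lp_norm_def using p0
    by (intro enn_powr_mono nn_integral_mono) (auto intro: enn_powr_mono gD_le)
  have main: "weak_Lp_norm p (lebesgue :: ('a \<times> 'a) measure)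
      (\<lambda>(x, y). (f x - f y) / norm (x - y) powr (real DIM('a) / p + s)) \<le> ennreal C * enn_powr I (1 / p)"
  proof (cases "I = \<infinity>")
    case True
    then show ?thesis using C0 by (simp add: enn_powr_def ennreal_mult_top)
  next
    case False
    define Ir where "Ir = enn2real I"
    have Ir0: "Ir \<ge> 0" unfolding Ir_def by simp
    have IIr: "I = ennreal Ir" unfolding Ir_def using False by (simp add: less_top[symmetric] ennreal_enn2real)
    show ?thesis unfolding weak_Lp_norm_def
    proof (rule SUP_least)
      fix t :: real assume "t \<in> {0<..}"
      then have t: "t > 0" by simp
      define B where "B = 2 * (om * (2 * c3 / t) powr p) * Ir"
      have B0: "B \<ge> 0" unfolding B_def using om_pos Ir0 by simp
      have em: "emeasure (lebesgue :: ('a \<times> 'a) measure)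
          {z \<in> space lebesgue. t < \<bar>(\<lambda>(x, y). (f x - f y) / norm (x - y) powr (real DIM('a) / p + s)) z\<bar>}
          \<le> ennreal B"
      proof -
        have "emeasure (lebesgue :: ('a \<times> 'a) measure)
          {z \<in> space lebesgue. t < \<bar>(\<lambda>(x, y). (f x - f y) / norm (x - y) powr (real DIM('a) / p + s)) z\<bar>}
          \<le> ennreal (2 * (om * (2 * c3 / t) powr p)) * I"
          using weak_est[OF p _ t] False unfolding I_def by simp
        also have "\<dots> = ennreal B" unfolding IIr B_def using om_pos Ir0
          by (simp add: ennreal_mult[symmetric])
        finally show ?thesis .
      qed
      have "ennreal t * enn_powr (emeasure (lebesgue :: ('a \<times> 'a) measure)
          {z \<in> space lebesgue. t < \<bar>(\<lambda>(x, y). (f x - f y) / norm (x - y) powr (real DIM('a) / p + s)) z\<bar>}) (1 / p)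
          \<le> ennreal t * enn_powr (ennreal B) (1 / p)"
        using p0 by (intro mult_left_mono enn_powr_mono em) auto
      also have "\<dots> = ennreal (t * B powr (1 / p))"
        using B0 t by (simp add: enn_powr_ennreal ennreal_mult)
      also have "t * B powr (1 / p) = C * Ir powr (1 / p)"
      proof -
        have "B = C powr p * Ir * t powr (- p)"
          unfolding B_def CP using t c3_pos by (simp add: powr_divide powr_minus field_simps)
        then have "B powr (1 / p) = (C powr p) powr (1 / p) * Ir powr (1 / p) * (t powr (- p)) powr (1 / p)"
          using C0 Ir0 t by (simp add: powr_mult)
        also have "\<dots> = C * Ir powr (1 / p) * (1 / t)"
        proof -
          have e: "- p * (1 / p) = - 1" using p0 by simp
          have "(t powr (- p)) powr (1 / p) = t powr (- 1)" by (simp only: powr_powr e)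
          also have "\<dots> = 1 / t" using t by (simp add: powr_minus_divide)
          finally have tt: "(t powr (- p)) powr (1 / p) = 1 / t" .
          have "(C powr p) powr (1 / p) = C" using C0 p0 by (simp add: powr_powr)
          then show ?thesis using tt by simp
        qed
        finally show ?thesis using t by simp
      qed
      also have "ennreal (C * Ir powr (1 / p)) = ennreal C * enn_powr I (1 / p)"
        unfolding IIr using C0 Ir0 by (simp add: enn_powr_ennreal ennreal_mult)
      finally show "ennreal t * enn_powr (emeasure (lebesgue :: ('a \<times> 'a) measure)
          {z \<in> space lebesgue. t < \<bar>(\<lambda>(x, y). (f x - f y) / norm (x - y) powr (real DIM('a) / p + s)) z\<bar>}) (1 / p)
          \<le> ennreal C * enn_powr I (1 / p)" .
    qed
  qed
  also have "\<dots> \<le> ennreal C * Lp_norm p lebesgue (sharp_max s f)"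
    using mono unfolding LpgD by (rule mult_left_mono) simp
  finally show ?thesis unfolding C_def .
qed

end

theorem mainTheorem7:
  fixes p s :: real
  assumes "1 < p" and "0 < s" and "s \<le> 1"
  shows "\<exists>C::real. \<forall>f :: 'a::euclidean_space \<Rightarrow> real. locally_integrable f \<longrightarrow>
    weak_Lp_norm p (lebesgue :: ('a \<times> 'a) measure)
      (\<lambda>(x, y). (f x - f y) / norm (x - y) powr (real DIM('a) / p + s))
    \<le> ennreal C * Lp_norm p lebesgue (sharp_max s f)"
proof (intro exI[of _ "(2 * sharp.om TYPE('a) * (2 * sharp.c3 TYPE('a) s) powr p) powr (1 / p)"] allI impI)
  fix f :: "'a \<Rightarrow> real"
  assume li: "locally_integrable f"
  interpret sharp f s using li assms(2) by unfold_locales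
  show "weak_Lp_norm p (lebesgue :: ('a \<times> 'a) measure)
      (\<lambda>(x, y). (f x - f y) / norm (x - y) powr (real DIM('a) / p + s))
    \<le> ennreal ((2 * sharp.om TYPE('a) * (2 * sharp.c3 TYPE('a) s) powr p) powr (1 / p)) * Lp_norm p lebesgue (sharp_max s f)"
    by (rule final[OF assms(1)])
qed

end
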